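(* For positive integers $m$ and $n$, \[ \overline{{m+n+1 \brack m+1}}_{q,t} =1 + \sum_{j=1}^{n} q^{j} \left( \overline{{m+j \brack j}}_{q,t} + t\, \overline{{m+j-1 \brack j-1}}_{q,t} \right). \]
   Context: An overpartition is a partition in which the last occurrence of each distinct part size may be overlined; its weight $|\lambda|$ is the sum of its parts. For integers $0\le b\le a$, $\overline{{a \brack b}}_{q,t}=\sum_{\lambda} t^{\#_o(\lambda)} q^{|\lambda|}$, the sum over all overpartitions $\lambda$ with largest part at most $a-b$ and at most $b$ parts, $\#_o(\lambda)$ being the number of overlined parts. *)

theory Defs
  imports Main
begin

text \<open>An overpartition is encoded by its multiplicity function c (c i = number of
  parts equal to i; only positive parts) together with the set S of part sizes
  whose last occurrence is overlined (S must consist of part sizes that occur).\<close>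

definition overpartitions_bounded :: "nat \<Rightarrow> nat \<Rightarrow> ((nat \<Rightarrow> nat) \<times> nat set) set" where
  "overpartitions_bounded k b =
     {(c, S). (\<forall>i. c i \<noteq> 0 \<longrightarrow> 1 \<le> i \<and> i \<le> k)
            \<and> (\<Sum>i\<in>{i. c i \<noteq> 0}. c i) \<le> b
            \<and> S \<subseteq> {i. c i \<noteq> 0}}"

definition op_weight :: "(nat \<Rightarrow> nat) \<Rightarrow> nat" where
  "op_weight c = (\<Sum>i\<in>{i. c i \<noteq> 0}. i * c i)"

definition over_gauss :: "nat \<Rightarrow> nat \<Rightarrow> 'a::comm_ring_1 \<Rightarrow> 'a \<Rightarrow> 'a" where
  "over_gauss a b q t =
     (\<Sum>(c, S)\<in>overpartitions_bounded (a - b) b. t ^ card S * q ^ op_weight c)"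

end

theory Submission
  imports Defs "HOL-Library.FuncSet"
begin

definition supp_ok :: "nat \<Rightarrow> (nat \<Rightarrow> nat) \<Rightarrow> bool" where
  "supp_ok k c \<longleftrightarrow> (\<forall>i. c i \<noteq> 0 \<longrightarrow> 1 \<le> i \<and> i \<le> k)"

lemma mem_P:
  "(c, S) \<in> overpartitions_bounded k b \<longleftrightarrow>
     supp_ok k c \<and> sum c {1..k} \<le> b \<and> S \<subseteq> {i. c i \<noteq> 0}"
proof -
  have "supp_ok k c \<Longrightarrow> sum c {i. c i \<noteq> 0} = sum c {1..k}"
    by (rule sum.mono_neutral_left) (auto simp: supp_ok_def)
  thus ?thesis by (auto simp: overpartitions_bounded_def supp_ok_def)
qed

lemma weight_eq: "supp_ok k c \<Longrightarrow> op_weight c = (\<Sum>i=1..k. i * c i)"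
  unfolding op_weight_def by (rule sum.mono_neutral_left) (auto simp: supp_ok_def)

lemma finite_P: "finite (overpartitions_bounded k b)"
proof -
  let ?E = "\<lambda>f. (\<lambda>i. if i \<in> {1..k} then f i else (0::nat))"
  have "overpartitions_bounded k b \<subseteq> ?E ` (PiE {1..k} (\<lambda>_. {0..b})) \<times> Pow {1..k}"
  proof
    fix x assume x: "x \<in> overpartitions_bounded k b"
    obtain c S where xc: "x = (c, S)" by (cases x)
    have h: "supp_ok k c" "sum c {1..k} \<le> b" "S \<subseteq> {i. c i \<noteq> 0}" using x xc by (simp_all add: mem_P)
    have "c = ?E (restrict c {1..k})" using h(1) by (auto simp: supp_ok_def fun_eq_iff)
    moreover have "restrict c {1..k} \<in> PiE {1..k} (\<lambda>_. {0..b})"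
    proof -
      have "\<And>i. i \<in> {1..k} \<Longrightarrow> c i \<le> b"
        using h(2) by (meson finite_atLeastAtMost member_le_sum order_trans zero_le)
      thus ?thesis by auto
    qed
    moreover have "S \<subseteq> {1..k}" using h(1,3) by (auto simp: supp_ok_def)
    ultimately show "x \<in> ?E ` (PiE {1..k} (\<lambda>_. {0..b})) \<times> Pow {1..k}" using xc by blast
  qed
  thus ?thesis by (rule finite_subset) (auto intro: finite_PiE)
qed

lemma Pk_eq: "overpartitions_bounded k B =
   {(c, S). (c, S) \<in> overpartitions_bounded (Suc k) B \<and> c (Suc k) = 0}"
proof -
  have key: "supp_ok k c \<longleftrightarrow> supp_ok (Suc k) c \<and> c (Suc k) = 0" for c :: "nat \<Rightarrow> nat"
  proof
    assume a: "supp_ok k c"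
    have "supp_ok (Suc k) c" unfolding supp_ok_def
    proof (intro allI impI)
      fix i assume "c i \<noteq> 0"
      then have "1 \<le> i \<and> i \<le> k" using a by (simp add: supp_ok_def)
      thus "1 \<le> i \<and> i \<le> Suc k" by simp
    qed
    moreover have "c (Suc k) = 0" using a unfolding supp_ok_def by (metis Suc_n_not_le_n)
    ultimately show "supp_ok (Suc k) c \<and> c (Suc k) = 0" by simp
  next
    assume a: "supp_ok (Suc k) c \<and> c (Suc k) = 0"
    show "supp_ok k c" unfolding supp_ok_def
    proof (intro allI impI)
      fix i assume i: "c i \<noteq> 0"
      then have "i \<noteq> Suc k" using a by auto
      moreover have "1 \<le> i" "i \<le> Suc k" using a i by (auto simp: supp_ok_def)
      ultimately show "1 \<le> i \<and> i \<le> k" by simp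
    qed
  qed
  show ?thesis
  proof (rule set_eqI)
    fix x :: "(nat \<Rightarrow> nat) \<times> nat set"
    obtain c S where xc: "x = (c, S)" by (cases x)
    show "x \<in> overpartitions_bounded k B \<longleftrightarrow>
      x \<in> {(c, S). (c, S) \<in> overpartitions_bounded (Suc k) B \<and> c (Suc k) = 0}"
      unfolding xc using key[of c] by (auto simp: mem_P)
  qed
qed

lemma sum_upd: "sum (c(Suc k := x)) {1..Suc k} = sum c {1..k} + x"
proof -
  have "sum (c(Suc k := x)) {1..k} = sum c {1..k}" by (rule sum.cong) auto
  thus ?thesis by simp
qed

lemma supp_upd: "supp_ok (Suc k) c \<Longrightarrow> supp_ok (Suc k) (c(Suc k := x))"
  by (auto simp: supp_ok_def)

lemma weight_upd: "supp_ok (Suc k) c \<Longrightarrow>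
   op_weight (c(Suc k := x)) = (\<Sum>i=1..k. i * c i) + Suc k * x"
proof -
  assume a: "supp_ok (Suc k) c"
  have "op_weight (c(Suc k := x)) = (\<Sum>i=1..Suc k. i * (c(Suc k := x)) i)"
    by (rule weight_eq[OF supp_upd[OF a]])
  also have "\<dots> = (\<Sum>i=1..k. i * (c(Suc k := x)) i) + Suc k * x" by simp
  also have "(\<Sum>i=1..k. i * (c(Suc k := x)) i) = (\<Sum>i=1..k. i * c i)" by (rule sum.cong) auto
  finally show ?thesis .
qed

lemma weight_split: "supp_ok (Suc k) c \<Longrightarrow>
   op_weight c = (\<Sum>i=1..k. i * c i) + Suc k * c (Suc k)"
  using weight_upd[of k c "c (Suc k)"] by simp

lemma mem_PS: "(c, S) \<in> overpartitions_bounded (Suc k) b \<longleftrightarrow>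
     supp_ok (Suc k) c \<and> sum c {1..k} + c (Suc k) \<le> b \<and> S \<subseteq> {i. c i \<noteq> 0}"
  by (simp add: mem_P)

lemma rec_P:
  fixes q t :: "'a::comm_ring_1"
  defines "f \<equiv> (\<lambda>(c::nat\<Rightarrow>nat, S::nat set). t ^ card S * q ^ op_weight c)"
  shows "sum f (overpartitions_bounded (Suc k) (Suc b)) =
     sum f (overpartitions_bounded k (Suc b)) +
     q ^ Suc k * (sum f (overpartitions_bounded (Suc k) b) + t * sum f (overpartitions_bounded k b))"
proof -
  define K where "K = Suc k"
  define P where "P = overpartitions_bounded"
  define Aa where "Aa = {(c, S). (c, S) \<in> P K (Suc b) \<and> c K \<ge> 2}"
  define Ab where "Ab = {(c, S). (c, S) \<in> P K (Suc b) \<and> c K = 1 \<and> K \<notin> S}"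
  define Ac where "Ac = {(c, S). (c, S) \<in> P K (Suc b) \<and> c K = 1 \<and> K \<in> S}"
  define Ya where "Ya = {(c, S). (c, S) \<in> P K b \<and> c K \<ge> 1}"
  have finP: "finite (P a b')" for a b' unfolding P_def by (rule finite_P)
  have e1: "P K (Suc b) = P k (Suc b) \<union> (Aa \<union> (Ab \<union> Ac))"
    unfolding Aa_def Ab_def Ac_def P_def K_def Pk_eq[of k "Suc b"] by auto
  have e2: "P K b = P k b \<union> Ya"
    unfolding Ya_def P_def K_def Pk_eq[of k b] by auto
  have fins: "finite Aa" "finite Ab" "finite Ac" "finite Ya"
    unfolding Aa_def Ab_def Ac_def Ya_def by (auto intro: finite_subset[OF _ finP])
  have d0: "P k B \<inter> {(c, S). (c, S) \<in> P K B' \<and> c K \<noteq> 0} = {}" for B B'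
    unfolding P_def K_def Pk_eq[of k B] by auto
  have d1: "P k (Suc b) \<inter> (Aa \<union> (Ab \<union> Ac)) = {}"
    using d0[of "Suc b" "Suc b"] unfolding Aa_def Ab_def Ac_def by auto
  have s1: "sum f (P K (Suc b)) = sum f (P k (Suc b)) + (sum f Aa + (sum f Ab + sum f Ac))"
    unfolding e1
    apply (subst sum.union_disjoint[OF finP _ d1])
     apply (simp add: fins)
    apply (subst sum.union_disjoint)
       apply (simp_all add: fins)
     apply (auto simp: Aa_def Ab_def Ac_def)[1]
    apply (subst sum.union_disjoint)
       apply (simp_all add: fins)
    apply (auto simp: Aa_def Ab_def Ac_def)[1]
    done
  have s2: "sum f (P K b) = sum f (P k b) + sum f Ya"
    unfolding e2
    apply (rule sum.union_disjoint[OF finP fins(4)])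
    using d0[of b b] unfolding Ya_def by auto
  have s3: "sum f Aa = sum (\<lambda>y. q ^ K * f y) Ya"
  proof (rule sum.reindex_bij_witness[where j = "\<lambda>(c, S). (c(K := c K - 1), S)"
        and i = "\<lambda>(c, S). (c(K := Suc (c K)), S)"])
    show "\<And>a. a \<in> Aa \<Longrightarrow> (case case a of (c, S) \<Rightarrow> (c(K := c K - 1), S) of
             (c, S) \<Rightarrow> (c(K := Suc (c K)), S)) = a"
      by (auto simp: Aa_def)
    show "\<And>a. a \<in> Aa \<Longrightarrow> (case a of (c, S) \<Rightarrow> (c(K := c K - 1), S)) \<in> Ya"
      by (auto simp: Aa_def Ya_def P_def K_def mem_PS sum_upd supp_upd)
    show "\<And>b. b \<in> Ya \<Longrightarrow> (case case b of (c, S) \<Rightarrow> (c(K := Suc (c K)), S) of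
             (c, S) \<Rightarrow> (c(K := c K - 1), S)) = b"
      by (auto simp: Ya_def)
    show "\<And>b. b \<in> Ya \<Longrightarrow> (case b of (c, S) \<Rightarrow> (c(K := Suc (c K)), S)) \<in> Aa"
      by (auto simp: Aa_def Ya_def P_def K_def mem_PS sum_upd supp_upd)
    fix a assume aA: "a \<in> Aa"
    obtain c S where ac: "a = (c, S)" by (cases a)
    have h: "supp_ok (Suc k) c" "c K \<ge> 2" using aA ac by (auto simp: Aa_def P_def K_def mem_PS)
    have w1: "op_weight c = (\<Sum>i=1..k. i * c i) + K * (c K - 1) + K"
    proof -
      have "K * c K = K * (c K - 1) + K" using h(2) by (cases "c K") auto
      thus ?thesis using weight_split[OF h(1)] unfolding K_def by simp
    qed
    have w2: "op_weight (c(K := c K - 1)) = (\<Sum>i=1..k. i * c i) + K * (c K - 1)"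
      using weight_upd[OF h(1)] unfolding K_def by simp
    show "q ^ K * f (case a of (c, S) \<Rightarrow> (c(K := c K - 1), S)) = f a"
      unfolding ac f_def using w1 w2 by (simp add: power_add algebra_simps)
  qed
  have pk: "P k B = {(c, S). (c, S) \<in> P K B \<and> c K = 0}" for B
    unfolding P_def K_def by (rule Pk_eq)
  have s4: "sum f Ab = sum (\<lambda>y. q ^ K * f y) (P k b)"
  proof (rule sum.reindex_bij_witness[where j = "\<lambda>(c, S). (c(K := 0), S)"
        and i = "\<lambda>(c, S). (c(K := 1), S)"])
    show "\<And>a. a \<in> Ab \<Longrightarrow> (case case a of (c, S) \<Rightarrow> (c(K := 0), S) of
             (c, S) \<Rightarrow> (c(K := 1), S)) = a"
      by (auto simp: Ab_def)
    show "\<And>a. a \<in> Ab \<Longrightarrow> (case a of (c, S) \<Rightarrow> (c(K := 0), S)) \<in> P k b"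
      unfolding pk by (auto simp: Ab_def P_def K_def mem_PS sum_upd supp_upd)
    show "\<And>b'. b' \<in> P k b \<Longrightarrow> (case case b' of (c, S) \<Rightarrow> (c(K := 1), S) of
             (c, S) \<Rightarrow> (c(K := 0), S)) = b'"
      unfolding pk by auto
    show "\<And>b'. b' \<in> P k b \<Longrightarrow> (case b' of (c, S) \<Rightarrow> (c(K := 1), S)) \<in> Ab"
      unfolding pk by (auto simp: Ab_def P_def K_def mem_PS sum_upd supp_upd)
    fix a assume aA: "a \<in> Ab"
    obtain c S where ac: "a = (c, S)" by (cases a)
    have h: "supp_ok (Suc k) c" "c K = 1" using aA ac by (auto simp: Ab_def P_def K_def mem_PS)
    have w1: "op_weight c = (\<Sum>i=1..k. i * c i) + K"
      using weight_split[OF h(1)] h(2) unfolding K_def by simp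
    have w2: "op_weight (c(K := 0)) = (\<Sum>i=1..k. i * c i)"
      using weight_upd[OF h(1)] unfolding K_def by simp
    show "q ^ K * f (case a of (c, S) \<Rightarrow> (c(K := 0), S)) = f a"
      unfolding ac f_def using w1 w2 by (simp add: power_add algebra_simps)
  qed
  have s5: "sum f Ac = sum (\<lambda>y. t * q ^ K * f y) (P k b)"
  proof (rule sum.reindex_bij_witness[where j = "\<lambda>(c, S). (c(K := 0), S - {K})"
        and i = "\<lambda>(c, S). (c(K := 1), insert K S)"])
    show "\<And>a. a \<in> Ac \<Longrightarrow> (case case a of (c, S) \<Rightarrow> (c(K := 0), S - {K}) of
             (c, S) \<Rightarrow> (c(K := 1), insert K S)) = a"
      by (auto simp: Ac_def)
    show "\<And>a. a \<in> Ac \<Longrightarrow> (case a of (c, S) \<Rightarrow> (c(K := 0), S - {K})) \<in> P k b"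
      unfolding pk by (auto simp: Ac_def P_def K_def mem_PS sum_upd supp_upd)
    show "\<And>b'. b' \<in> P k b \<Longrightarrow> (case case b' of (c, S) \<Rightarrow> (c(K := 1), insert K S) of
             (c, S) \<Rightarrow> (c(K := 0), S - {K})) = b'"
      unfolding pk by (auto simp: P_def K_def mem_PS)
    show "\<And>b'. b' \<in> P k b \<Longrightarrow> (case b' of (c, S) \<Rightarrow> (c(K := 1), insert K S)) \<in> Ac"
      unfolding pk by (auto simp: Ac_def P_def K_def mem_PS sum_upd supp_upd)
    fix a assume aA: "a \<in> Ac"
    obtain c S where ac: "a = (c, S)" by (cases a)
    have h: "supp_ok (Suc k) c" "c K = 1" "K \<in> S" "S \<subseteq> {i. c i \<noteq> 0}"
      using aA ac by (auto simp: Ac_def P_def K_def mem_PS)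
    have "S \<subseteq> {1..Suc k}" using h(1,4) by (auto simp: supp_ok_def)
    hence fS: "finite S" by (rule finite_subset) simp
    have cS: "card S = Suc (card (S - {K}))" using fS h(3) by (metis card_Suc_Diff1)
    have w1: "op_weight c = (\<Sum>i=1..k. i * c i) + K"
      using weight_split[OF h(1)] h(2) unfolding K_def by simp
    have w2: "op_weight (c(K := 0)) = (\<Sum>i=1..k. i * c i)"
      using weight_upd[OF h(1)] unfolding K_def by simp
    show "t * q ^ K * f (case a of (c, S) \<Rightarrow> (c(K := 0), S - {K})) = f a"
      unfolding ac f_def using w1 w2 cS by (simp add: power_add algebra_simps)
  qed
  have "sum f (P K (Suc b)) = sum f (P k (Suc b)) + (q ^ K * sum f Ya + (q ^ K * sum f (P k b)
         + t * q ^ K * sum f (P k b)))"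
    using s1 s3 s4 s5 by (simp add: sum_distrib_left)
  also have "sum f Ya = sum f (P K b) - sum f (P k b)" using s2 by simp
  finally show ?thesis unfolding P_def K_def by (simp add: algebra_simps)
qed


lemma P_triv: "k = 0 \<or> b = 0 \<Longrightarrow> overpartitions_bounded k b = {(\<lambda>_. 0, {})}"
proof -
  assume kb: "k = 0 \<or> b = 0"
  have "(c, S) \<in> overpartitions_bounded k b \<longleftrightarrow> c = (\<lambda>_. 0) \<and> S = {}" for c S
  proof
    assume "(c, S) \<in> overpartitions_bounded k b"
    hence h: "supp_ok k c" "sum c {1..k} \<le> b" "S \<subseteq> {i. c i \<noteq> 0}" by (simp_all add: mem_P)
    have "c i = 0" for i
    proof (rule ccontr)
      assume ci: "c i \<noteq> 0"
      hence i: "1 \<le> i" "i \<le> k" using h(1) by (auto simp: supp_ok_def)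
      hence "c i \<le> sum c {1..k}" by (intro member_le_sum) auto
      thus False using kb i ci h(2) by auto
    qed
    thus "c = (\<lambda>_. 0) \<and> S = {}" using h(3) by auto
  qed (auto simp: mem_P supp_ok_def)
  thus ?thesis by auto
qed

fun gg :: "'a::comm_ring_1 \<Rightarrow> 'a \<Rightarrow> nat \<Rightarrow> nat \<Rightarrow> 'a" where
  "gg q t 0 b = 1"
| "gg q t (Suc k) 0 = 1"
| "gg q t (Suc k) (Suc b) = gg q t k (Suc b) + q ^ Suc k * (gg q t (Suc k) b + t * gg q t k b)"

lemma Gs_eq:
  "(\<Sum>(c, S)\<in>overpartitions_bounded k b. t ^ card S * q ^ op_weight c) = gg q t k b"
proof (induction q t k b rule: gg.induct)
  case (1 q t b)
  then show ?case by (simp add: P_triv op_weight_def)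
next
  case (2 q t k)
  then show ?case by (simp add: P_triv op_weight_def)
next
  case (3 q t k b)
  then show ?case using rec_P[of t q k b] by simp
qed

lemma gg_k0: "gg q t k 0 = 1" by (cases k) auto

lemma gg_1: "gg q t (Suc 0) (Suc b) = gg q t (Suc 0) b + q ^ Suc b * (1 + t)"
proof (induction b)
  case 0 then show ?case by simp
next
  case (Suc b)
  have "gg q t (Suc 0) (Suc (Suc b)) = 1 + q * (gg q t (Suc 0) (Suc b) + t)" by simp
  also have "\<dots> = 1 + q * (gg q t (Suc 0) b + t) + q * q ^ Suc b * (1 + t)"
    using Suc by (simp add: algebra_simps)
  also have "1 + q * (gg q t (Suc 0) b + t) = gg q t (Suc 0) (Suc b)" by simp
  finally show ?case by simp
qed

lemma gg_b1: "gg q t (Suc k) (Suc 0) = 1 + q * (gg q t k (Suc 0) + t)"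
proof (induction k)
  case 0 then show ?case by simp
next
  case (Suc k)
  have "gg q t (Suc (Suc k)) (Suc 0) = gg q t (Suc k) (Suc 0) + q ^ Suc (Suc k) * (1 + t)"
    by (simp add: gg_k0)
  also have "\<dots> = 1 + q * (gg q t k (Suc 0) + q ^ Suc k * (1 + t) + t)"
    using Suc by (simp add: algebra_simps)
  also have "gg q t k (Suc 0) + q ^ Suc k * (1 + t) = gg q t (Suc k) (Suc 0)"
    by (simp add: gg_k0)
  finally show ?case .
qed

lemma alg_step:
  fixes a bb c d e u v w z q Q R t :: "'a::comm_ring_1"
  assumes e1: "z = w + q * Q * (v + t * u)"
    and e2: "w = a + Q * (u + t * bb)"
    and e3: "u = bb + Q * (d + t * c)"
    and e4: "v = u + q * Q * (e + t * d)"
    and i1: "w = u + q * R * (a + t * bb)"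
    and i2: "v = e + R * (u + t * d)"
    and i3: "u = d + R * (bb + t * c)"
  shows "z = v + q * R * (w + t * u)"
proof -
  have "z - (v + q * R * (w + t * u)) =
    (z - (w + q * Q * (v + t * u))) + (w - (u + q * R * (a + t * bb)))
    - (v - (u + q * Q * (e + t * d)))
    + q * Q * ((v - (e + R * (u + t * d))) + t * (u - (d + R * (bb + t * c))))
    - q * R * ((w - (a + Q * (u + t * bb))) + t * (u - (bb + Q * (d + t * c))))"
    by (simp add: algebra_simps)
  also have "\<dots> = 0" using assms by simp
  finally show ?thesis by simp
qed

lemma gg_B: "gg q t (Suc k) (Suc b) = gg q t (Suc k) b + q ^ Suc b * (gg q t k (Suc b) + t * gg q t k b)"
proof (induction k arbitrary: b)
  case 0
  then show ?case using gg_1[of q t b] by simp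
next
  case (Suc k)
  note IHk = Suc
  show ?case
  proof (induction b)
    case 0
    then show ?case using gg_b1[of q t "Suc k"] by (simp add: gg_k0)
  next
    case (Suc b)
    note IHb = Suc
    let ?g = "gg q t"
    have e1: "?g (Suc (Suc k)) (Suc (Suc b)) = ?g (Suc k) (Suc (Suc b)) +
        q ^ Suc (Suc k) * (?g (Suc (Suc k)) (Suc b) + t * ?g (Suc k) (Suc b))" by simp
    have e2: "?g (Suc k) (Suc (Suc b)) = ?g k (Suc (Suc b)) +
        q ^ Suc k * (?g (Suc k) (Suc b) + t * ?g k (Suc b))" by simp
    have e3: "?g (Suc k) (Suc b) = ?g k (Suc b) + q ^ Suc k * (?g (Suc k) b + t * ?g k b)" by simp
    have e4: "?g (Suc (Suc k)) (Suc b) = ?g (Suc k) (Suc b) +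
        q ^ Suc (Suc k) * (?g (Suc (Suc k)) b + t * ?g (Suc k) b)" by simp
    have i1: "?g (Suc k) (Suc (Suc b)) = ?g (Suc k) (Suc b) + q ^ Suc (Suc b) * (?g k (Suc (Suc b)) + t * ?g k (Suc b))"
      by (rule IHk)
    have i2: "?g (Suc (Suc k)) (Suc b) = ?g (Suc (Suc k)) b + q ^ Suc b * (?g (Suc k) (Suc b) + t * ?g (Suc k) b)"
      by (rule IHb)
    have i3: "?g (Suc k) (Suc b) = ?g (Suc k) b + q ^ Suc b * (?g k (Suc b) + t * ?g k b)"
      by (rule IHk)
    show ?case
      apply (subst power_Suc)
      apply (rule alg_step[where w = "?g (Suc k) (Suc (Suc b))" and v = "?g (Suc (Suc k)) (Suc b)"
          and u = "?g (Suc k) (Suc b)" and a = "?g k (Suc (Suc b))" and bb = "?g k (Suc b)"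
          and c = "?g k b" and d = "?g (Suc k) b" and e = "?g (Suc (Suc k)) b"
          and Q = "q ^ Suc k" and R = "q ^ Suc b"])
      using e1 e2 e3 e4 i1 i2 i3 by (simp_all add: mult.assoc)
  qed
qed


lemma gg_sym: "gg q t k b = gg q t b k"
proof (induction k arbitrary: b)
  case 0
  then show ?case by (simp add: gg_k0)
next
  case (Suc k)
  note IHk = Suc
  show ?case
  proof (induction b)
    case 0
    then show ?case by (simp add: gg_k0)
  next
    case (Suc b)
    have "gg q t (Suc k) (Suc b) = gg q t k (Suc b) + q ^ Suc k * (gg q t (Suc k) b + t * gg q t k b)"
      by simp
    also have "\<dots> = gg q t (Suc b) k + q ^ Suc k * (gg q t b (Suc k) + t * gg q t b k)"
      using IHk[of "Suc b"] IHk[of b] Suc by simp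
    also have "\<dots> = gg q t (Suc b) (Suc k)" using gg_B[of q t b k] by simp
    finally show ?case .
  qed
qed

lemma gg_iter: "gg q t n (Suc m) = 1 + (\<Sum>j=1..n. q ^ j * (gg q t j m + t * gg q t (j - 1) m))"
proof (induction n)
  case 0 then show ?case by simp
next
  case (Suc n) then show ?case by (simp add: algebra_simps)
qed

lemma over_gauss_gg: "over_gauss a b q t = gg q t (a - b) b"
  unfolding over_gauss_def by (rule Gs_eq)

theorem proposition4p1:
  fixes m n :: nat and q t :: "'a::comm_ring_1"
  assumes "m \<ge> 1" and "n \<ge> 1"
  shows "over_gauss (m + n + 1) (m + 1) q t =
    1 + (\<Sum>j = 1..n. q ^ j * (over_gauss (m + j) j q t + t * over_gauss (m + j - 1) (j - 1) q t))"
proof -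
  have "over_gauss (m + n + 1) (m + 1) q t = gg q t n (Suc m)" by (simp add: over_gauss_gg)
  also have "\<dots> = 1 + (\<Sum>j=1..n. q ^ j * (gg q t j m + t * gg q t (j - 1) m))" by (rule gg_iter)
  also have "(\<Sum>j=1..n. q ^ j * (gg q t j m + t * gg q t (j - 1) m)) =
      (\<Sum>j = 1..n. q ^ j * (over_gauss (m + j) j q t + t * over_gauss (m + j - 1) (j - 1) q t))"
  proof (rule sum.cong)
    fix j assume "j \<in> {1..n}"
    hence j: "j \<ge> 1" by simp
    have "m + j - 1 - (j - 1) = m" using j by simp
    thus "q ^ j * (gg q t j m + t * gg q t (j - 1) m) =
        q ^ j * (over_gauss (m + j) j q t + t * over_gauss (m + j - 1) (j - 1) q t)"
      by (simp add: over_gauss_gg gg_sym[of q t m])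
  qed simp
  finally show ?thesis .
qed

end
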